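(* For every cwf $\mathcal C$, the assignment $\Gamma\mapsto\mathrm{Pr}^\wedge_{\mathcal C}(\Gamma)$ described below is a functor from $\mathcal C^{\mathrm{op}}$ to the category of lower semilattices (preorders with a top element and binary meets, with maps preserving order, top and meets); that is, $(\mathcal C,\mathrm{Pr}^\wedge_{\mathcal C})$ is a cwf with Horn doctrine. In particular, $\le_\Gamma$ is a preorder on $\mathrm{F}(\Gamma)$, $\langle\rangle$ is a top element, concatenation is a binary meet, and each $f:\Delta\to\Gamma$ induces a map preserving $\le$, $\top$ and $\wedge$.
   Context: A category with families (cwf) consists of: a category $\mathcal C$ with a terminal object $\top$; for each object $\Gamma$ a class $\mathrm{Ty}(\Gamma)$, and for $f:\Delta\to\Gamma$ a function $A\mapsto A\{f\}:\mathrm{Ty}(\Gamma)\to\mathrm{Ty}(\Delta)$ with $A\{1\}=A$, $A\{f\circ g\}=A\{f\}\{g\}$; for $A\in\mathrm{Ty}(\Gamma)$ an object $\Gamma.A$ and a morphism $\mathrm{p}(A)=\mathrm{p}_\Gamma(A):\Gamma.A\to\Gamma$; for $A\in\mathrm{Ty}(\Gamma)$ a class $\mathrm{Tm}(\Gamma,A)$ and for $f:\Delta\to\Gamma$ a function $a\mapsto a\{f\}:\mathrm{Tm}(\Gamma,A)\to\mathrm{Tm}(\Delta,A\{f\})$ with $a\{1\}=a$, $a\{f\circ g\}=a\{f\}\{g\}$; for each $A\in\mathrm{Ty}(\Gamma)$ an element $\mathrm{v}_A\in\mathrm{Tm}(\Gamma.A,A\{\mathrm{p}(A)\})$; for $f:\Delta\to\Gamma$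 and $a\in\mathrm{Tm}(\Delta,A\{f\})$ a morphism $\langle f,a\rangle_A:\Delta\to\Gamma.A$ such that $\mathrm{p}(A)\circ\langle f,a\rangle_A=f$, $\mathrm{v}_A\{\langle f,a\rangle_A\}=a$, $\langle\mathrm{p}(A)\circ h,\mathrm{v}_A\{h\}\rangle_A=h$ for every $h:\Delta\to\Gamma.A$, and $\langle f,a\rangle_A\circ g=\langle f\circ g,a\{g\}\rangle_A$. Notation: $\mathrm{p}^{(0)}=\mathrm{id}$ and $\mathrm{p}^{(k)}$ is the composite of the $k$ last canonical projections, so that for $A_1,\ldots,A_n\in\mathrm{Ty}(\Gamma)$ the object $\Gamma.A_1.A_2\{\mathrm p\}.\cdots.A_n\{\mathrm p^{(n-1)}\}$ is formed by successively extending $\Gamma$ by each $A_k$ pulled back along the composite $\mathrm{p}^{(k-1)}$ of the projections down to $\Gamma$, and $\mathrm{p}^{(n)}$ is its projection to $\Gamma$. $\mathrm{F}(\Gamma)$ is the set of finite sequences $\langle A_1,\ldots,A_n\rangle$ of elements of $\mathrm{Ty}(\Gamma)$, with $\langle A_1,\ldots,A_n\rangle\le_\Gamma\langle B_1,\ldots,B_m\rangle$ iff for every $k=1,\ldots,m$ the class $\mathrm{Tm}(\Gamma.A_1.A_2\{\mathrm p\}.\cdots.A_n\{\mathrm p^{(n-1)}\},B_k\{\mathrm p^{(n)}\})$ is inhabited. $\mathrm{Pr}^\wedge_{\mathcal C}(\Gamma)=(\mathrm F(\Gamma),\le_\Gamma)$ with $\top_\Gamma=\langle\rangle$ and $\langle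 A_1,\ldots,A_n\rangle\wedge_\Gamma\langle B_1,\ldots,B_m\rangle=\langle A_1,\ldots,A_n,B_1,\ldots,B_m\rangle$, and for $f:\Delta\to\Gamma$, $\langle A_1,\ldots,A_n\rangle\{f\}=\langle A_1\{f\},\ldots,A_n\{f\}\rangle$. *)

theory Defs
  imports Main
begin

text \<open>Objects of type 'o,
  morphisms 'm, types 'ty, terms 'tm. cHom C D G is the hom-set from D to G;
  ccomp C g f is g composed with f (first f, then g).
  cpair C G A f a is the morphism written <f,a>_A with A in Ty(G).\<close>

record ('o, 'm, 'ty, 'tm) cwf_data =
  cOb    :: "'o set"
  cHom   :: "'o \<Rightarrow> 'o \<Rightarrow> 'm set"
  ccomp  :: "'m \<Rightarrow> 'm \<Rightarrow> 'm"
  cid    :: "'o \<Rightarrow> 'm"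
  cterm  :: "'o"
  cTy    :: "'o \<Rightarrow> 'ty set"
  ctysub :: "'ty \<Rightarrow> 'm \<Rightarrow> 'ty"
  cext   :: "'o \<Rightarrow> 'ty \<Rightarrow> 'o"
  cp     :: "'o \<Rightarrow> 'ty \<Rightarrow> 'm"
  cTm    :: "'o \<Rightarrow> 'ty \<Rightarrow> 'tm set"
  ctmsub :: "'tm \<Rightarrow> 'm \<Rightarrow> 'tm"
  cv     :: "'o \<Rightarrow> 'ty \<Rightarrow> 'tm"
  cpair  :: "'o \<Rightarrow> 'ty \<Rightarrow> 'm \<Rightarrow> 'tm \<Rightarrow> 'm"

definition is_category :: "('o, 'm, 'ty, 'tm, 'z) cwf_data_scheme \<Rightarrow> bool" where
  "is_category C \<longleftrightarrow>
     (\<forall>X Y f. f \<in> cHom C X Y \<longrightarrow> X \<in> cOb C \<and> Y \<in> cOb C)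
   \<and> (\<forall>X Y X' Y' f. f \<in> cHom C X Y \<longrightarrow> f \<in> cHom C X' Y' \<longrightarrow> X = X' \<and> Y = Y')
   \<and> (\<forall>X \<in> cOb C. cid C X \<in> cHom C X X)
   \<and> (\<forall>X Y Z f g. f \<in> cHom C X Y \<longrightarrow> g \<in> cHom C Y Z \<longrightarrow> ccomp C g f \<in> cHom C X Z)
   \<and> (\<forall>X Y f. f \<in> cHom C X Y \<longrightarrow> ccomp C (cid C Y) f = f \<and> ccomp C f (cid C X) = f)
   \<and> (\<forall>W X Y Z f g h. f \<in> cHom C W X \<longrightarrow> g \<in> cHom C X Y \<longrightarrow> h \<in> cHom C Y Z \<longrightarrow>
        ccomp C h (ccomp C g f) = ccomp C (ccomp C h g) f)"

definition is_cwf :: "('o, 'm, 'ty, 'tm, 'z) cwf_data_scheme \<Rightarrow> bool" where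
  "is_cwf C \<longleftrightarrow> is_category C
   \<comment> \<open>terminal object\<close>
   \<and> cterm C \<in> cOb C
   \<and> (\<forall>X \<in> cOb C. \<exists>!t. t \<in> cHom C X (cterm C))
   \<comment> \<open>types and their substitution\<close>
   \<and> (\<forall>G D f A. f \<in> cHom C D G \<longrightarrow> A \<in> cTy C G \<longrightarrow> ctysub C A f \<in> cTy C D)
   \<and> (\<forall>G \<in> cOb C. \<forall>A \<in> cTy C G. ctysub C A (cid C G) = A)
   \<and> (\<forall>G D E f g A. f \<in> cHom C D G \<longrightarrow> g \<in> cHom C E D \<longrightarrow> A \<in> cTy C G \<longrightarrow>
        ctysub C A (ccomp C f g) = ctysub C (ctysub C A f) g)
   \<comment> \<open>context comprehension\<close>
   \<and> (\<forall>G \<in> cOb C. \<forall>A \<in> cTy C G. cext C G A \<in> cOb C \<and> cp C G A \<in> cHom C (cext C G A) G)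
   \<comment> \<open>terms and their substitution\<close>
   \<and> (\<forall>G D f A a. f \<in> cHom C D G \<longrightarrow> A \<in> cTy C G \<longrightarrow> a \<in> cTm C G A \<longrightarrow>
        ctmsub C a f \<in> cTm C D (ctysub C A f))
   \<and> (\<forall>G \<in> cOb C. \<forall>A \<in> cTy C G. \<forall>a \<in> cTm C G A. ctmsub C a (cid C G) = a)
   \<and> (\<forall>G D E f g A a. f \<in> cHom C D G \<longrightarrow> g \<in> cHom C E D \<longrightarrow> A \<in> cTy C G \<longrightarrow>
        a \<in> cTm C G A \<longrightarrow> ctmsub C a (ccomp C f g) = ctmsub C (ctmsub C a f) g)
   \<comment> \<open>variable\<close>
   \<and> (\<forall>G \<in> cOb C. \<forall>A \<in> cTy C G. cv C G A \<in> cTm C (cext C G A) (ctysub C A (cp C G A)))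
   \<comment> \<open>pairing\<close>
   \<and> (\<forall>G D f A a. f \<in> cHom C D G \<longrightarrow> A \<in> cTy C G \<longrightarrow> a \<in> cTm C D (ctysub C A f) \<longrightarrow>
        cpair C G A f a \<in> cHom C D (cext C G A)
      \<and> ccomp C (cp C G A) (cpair C G A f a) = f
      \<and> ctmsub C (cv C G A) (cpair C G A f a) = a)
   \<and> (\<forall>G D A h. A \<in> cTy C G \<longrightarrow> h \<in> cHom C D (cext C G A) \<longrightarrow>
        cpair C G A (ccomp C (cp C G A) h) (ctmsub C (cv C G A) h) = h)
   \<and> (\<forall>G D E f g A a. f \<in> cHom C D G \<longrightarrow> g \<in> cHom C E D \<longrightarrow> A \<in> cTy C G \<longrightarrow>
        a \<in> cTm C D (ctysub C A f) \<longrightarrow>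
        ccomp C (cpair C G A f a) g = cpair C G A (ccomp C f g) (ctmsub C a g))"

text \<open>Iterated extension: for [A1,...,An] returns the object
  G.A1.A2{p}...An{p^(n-1)} together with its projection p^(n) to G.\<close>

definition tele :: "('o, 'm, 'ty, 'tm, 'z) cwf_data_scheme \<Rightarrow> 'o \<Rightarrow> 'ty list \<Rightarrow> 'o \<times> 'm" where
  "tele C G As = foldl (\<lambda>(D, q) A. (cext C D (ctysub C A q), ccomp C q (cp C D (ctysub C A q))))
                       (G, cid C G) As"

definition FF :: "('o, 'm, 'ty, 'tm, 'z) cwf_data_scheme \<Rightarrow> 'o \<Rightarrow> 'ty list set" where
  "FF C G = {As. set As \<subseteq> cTy C G}"

definition Fle :: "('o, 'm, 'ty, 'tm, 'z) cwf_data_scheme \<Rightarrow> 'o \<Rightarrow> 'ty list \<Rightarrow> 'ty list \<Rightarrow> bool" where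
  "Fle C G As Bs \<longleftrightarrow>
     (\<forall>k < length Bs. cTm C (fst (tele C G As)) (ctysub C (Bs ! k) (snd (tele C G As))) \<noteq> {})"

definition Fsub :: "('o, 'm, 'ty, 'tm, 'z) cwf_data_scheme \<Rightarrow> 'm \<Rightarrow> 'ty list \<Rightarrow> 'ty list" where
  "Fsub C f As = map (\<lambda>A. ctysub C A f) As"

definition lower_semilattice ::
  "'a set \<Rightarrow> ('a \<Rightarrow> 'a \<Rightarrow> bool) \<Rightarrow> 'a \<Rightarrow> ('a \<Rightarrow> 'a \<Rightarrow> 'a) \<Rightarrow> bool" where
  "lower_semilattice S le tp mt \<longleftrightarrow>
     (\<forall>x \<in> S. le x x)
   \<and> (\<forall>x \<in> S. \<forall>y \<in> S. \<forall>z \<in> S. le x y \<longrightarrow> le y z \<longrightarrow> le x z)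
   \<and> tp \<in> S \<and> (\<forall>x \<in> S. le x tp)
   \<and> (\<forall>x \<in> S. \<forall>y \<in> S. mt x y \<in> S \<and> le (mt x y) x \<and> le (mt x y) y
        \<and> (\<forall>z \<in> S. le z x \<longrightarrow> le z y \<longrightarrow> le z (mt x y)))"

definition lsl_hom ::
  "'a set \<Rightarrow> ('a \<Rightarrow> 'a \<Rightarrow> bool) \<Rightarrow> 'a \<Rightarrow> ('a \<Rightarrow> 'a \<Rightarrow> 'a) \<Rightarrow>
   'b set \<Rightarrow> ('b \<Rightarrow> 'b \<Rightarrow> bool) \<Rightarrow> 'b \<Rightarrow> ('b \<Rightarrow> 'b \<Rightarrow> 'b) \<Rightarrow> ('a \<Rightarrow> 'b) \<Rightarrow> bool" where
  "lsl_hom S le tp mt S' le' tp' mt' h \<longleftrightarrow>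
     (\<forall>x \<in> S. h x \<in> S')
   \<and> (\<forall>x \<in> S. \<forall>y \<in> S. le x y \<longrightarrow> le' (h x) (h y))
   \<and> h tp = tp'
   \<and> (\<forall>x \<in> S. \<forall>y \<in> S. h (mt x y) = mt' (h x) (h y))"

end

theory Submission
  imports Defs
begin

lemma catD:
  assumes "is_cwf C"
  shows "\<forall>X Y f. f \<in> cHom C X Y \<longrightarrow> X \<in> cOb C \<and> Y \<in> cOb C"
   "\<forall>X \<in> cOb C. cid C X \<in> cHom C X X"
   "\<forall>X Y Z f g. f \<in> cHom C X Y \<longrightarrow> g \<in> cHom C Y Z \<longrightarrow> ccomp C g f \<in> cHom C X Z"
   "\<forall>X Y f. f \<in> cHom C X Y \<longrightarrow> ccomp C (cid C Y) f = f \<and> ccomp C f (cid C X) = f"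
   "\<forall>W X Y Z f g h. f \<in> cHom C W X \<longrightarrow> g \<in> cHom C X Y \<longrightarrow> h \<in> cHom C Y Z \<longrightarrow>
        ccomp C h (ccomp C g f) = ccomp C (ccomp C h g) f"
  using assms unfolding is_cwf_def is_category_def apply - apply (elim conjE, assumption)+ done

lemma cwfD:
  assumes "is_cwf C"
  shows "\<forall>G D f A. f \<in> cHom C D G \<longrightarrow> A \<in> cTy C G \<longrightarrow> ctysub C A f \<in> cTy C D"
   "\<forall>G \<in> cOb C. \<forall>A \<in> cTy C G. ctysub C A (cid C G) = A"
   "\<forall>G D E f g A. f \<in> cHom C D G \<longrightarrow> g \<in> cHom C E D \<longrightarrow> A \<in> cTy C G \<longrightarrow>
        ctysub C A (ccomp C f g) = ctysub C (ctysub C A f) g"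
   "\<forall>G \<in> cOb C. \<forall>A \<in> cTy C G. cext C G A \<in> cOb C \<and> cp C G A \<in> cHom C (cext C G A) G"
   "\<forall>G D f A a. f \<in> cHom C D G \<longrightarrow> A \<in> cTy C G \<longrightarrow> a \<in> cTm C G A \<longrightarrow>
        ctmsub C a f \<in> cTm C D (ctysub C A f)"
   "\<forall>G \<in> cOb C. \<forall>A \<in> cTy C G. cv C G A \<in> cTm C (cext C G A) (ctysub C A (cp C G A))"
   "\<forall>G D f A a. f \<in> cHom C D G \<longrightarrow> A \<in> cTy C G \<longrightarrow> a \<in> cTm C D (ctysub C A f) \<longrightarrow>
        cpair C G A f a \<in> cHom C D (cext C G A)
      \<and> ccomp C (cp C G A) (cpair C G A f a) = f
      \<and> ctmsub C (cv C G A) (cpair C G A f a) = a"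
  using assms unfolding is_cwf_def apply - apply (elim conjE, assumption)+ done

lemma hom_ob: "is_cwf C \<Longrightarrow> f \<in> cHom C X Y \<Longrightarrow> X \<in> cOb C \<and> Y \<in> cOb C"
  using catD(1) by blast
lemma id_hom: "is_cwf C \<Longrightarrow> X \<in> cOb C \<Longrightarrow> cid C X \<in> cHom C X X"
  using catD(2) by blast
lemma comp_hom: "is_cwf C \<Longrightarrow> f \<in> cHom C X Y \<Longrightarrow> g \<in> cHom C Y Z \<Longrightarrow> ccomp C g f \<in> cHom C X Z"
  using catD(3) by blast
lemma id_right: "is_cwf C \<Longrightarrow> f \<in> cHom C X Y \<Longrightarrow> ccomp C f (cid C X) = f"
  using catD(4) by blast
lemma id_left: "is_cwf C \<Longrightarrow> f \<in> cHom C X Y \<Longrightarrow> ccomp C (cid C Y) f = f"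
  using catD(4) by blast
lemma assoc: "is_cwf C \<Longrightarrow> f \<in> cHom C W X \<Longrightarrow> g \<in> cHom C X Y \<Longrightarrow> h \<in> cHom C Y Z \<Longrightarrow>
        ccomp C h (ccomp C g f) = ccomp C (ccomp C h g) f"
  using catD(5) by blast
lemma tysub_ty: "is_cwf C \<Longrightarrow> f \<in> cHom C D G \<Longrightarrow> A \<in> cTy C G \<Longrightarrow> ctysub C A f \<in> cTy C D"
  using cwfD(1) by blast
lemma tysub_id: "is_cwf C \<Longrightarrow> G \<in> cOb C \<Longrightarrow> A \<in> cTy C G \<Longrightarrow> ctysub C A (cid C G) = A"
  using cwfD(2) by blast
lemma tysub_comp: "is_cwf C \<Longrightarrow> f \<in> cHom C D G \<Longrightarrow> g \<in> cHom C E D \<Longrightarrow> A \<in> cTy C G \<Longrightarrow>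
        ctysub C A (ccomp C f g) = ctysub C (ctysub C A f) g"
  using cwfD(3) by blast
lemma ext_ob: "is_cwf C \<Longrightarrow> G \<in> cOb C \<Longrightarrow> A \<in> cTy C G \<Longrightarrow> cext C G A \<in> cOb C \<and> cp C G A \<in> cHom C (cext C G A) G"
  using cwfD(4) by blast
lemma tmsub_tm: "is_cwf C \<Longrightarrow> f \<in> cHom C D G \<Longrightarrow> A \<in> cTy C G \<Longrightarrow> a \<in> cTm C G A \<Longrightarrow>
        ctmsub C a f \<in> cTm C D (ctysub C A f)"
  using cwfD(5) by blast
lemma v_tm: "is_cwf C \<Longrightarrow> G \<in> cOb C \<Longrightarrow> A \<in> cTy C G \<Longrightarrow> cv C G A \<in> cTm C (cext C G A) (ctysub C A (cp C G A))"
  using cwfD(6) by blast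
lemma pair_hom: "is_cwf C \<Longrightarrow> f \<in> cHom C D G \<Longrightarrow> A \<in> cTy C G \<Longrightarrow> a \<in> cTm C D (ctysub C A f) \<Longrightarrow>
        cpair C G A f a \<in> cHom C D (cext C G A) \<and> ccomp C (cp C G A) (cpair C G A f a) = f"
  using cwfD(7) by blast

lemma tele_snoc:
  "tele C G (Bs @ [B]) = (cext C (fst (tele C G Bs)) (ctysub C B (snd (tele C G Bs))),
      ccomp C (snd (tele C G Bs)) (cp C (fst (tele C G Bs)) (ctysub C B (snd (tele C G Bs)))))"
  unfolding tele_def by (simp add: split_beta)

lemma tele_nil: "tele C G [] = (G, cid C G)" unfolding tele_def by simp

lemma tele_wt:
  assumes c: "is_cwf C" and G: "G \<in> cOb C"
  shows "set Bs \<subseteq> cTy C G \<Longrightarrow> fst (tele C G Bs) \<in> cOb C \<and> snd (tele C G Bs) \<in> cHom C (fst (tele C G Bs)) G"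
proof (induction Bs rule: rev_induct)
  case Nil then show ?case using G id_hom[OF c G] by (simp add: tele_nil)
next
  case (snoc B Bs)
  let ?D = "fst (tele C G Bs)" and ?q = "snd (tele C G Bs)"
  have IH: "?D \<in> cOb C" "?q \<in> cHom C ?D G" using snoc by auto
  have B: "ctysub C B ?q \<in> cTy C ?D" using tysub_ty[OF c IH(2)] snoc.prems by auto
  show ?case using ext_ob[OF c IH(1) B] comp_hom[OF c _ IH(2)] by (simp add: tele_snoc)
qed

lemma lemA:
  assumes c: "is_cwf C" and G: "G \<in> cOb C"
  shows "set Bs \<subseteq> cTy C G \<Longrightarrow> u \<in> cHom C Del (fst (tele C G Bs)) \<Longrightarrow>
     \<forall>k < length Bs. cTm C Del (ctysub C (Bs ! k) (ccomp C (snd (tele C G Bs)) u)) \<noteq> {}"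
proof (induction Bs arbitrary: u rule: rev_induct)
  case Nil then show ?case by simp
next
  case (snoc B Bs)
  let ?D = "fst (tele C G Bs)" and ?q = "snd (tele C G Bs)"
  have IH0: "?D \<in> cOb C" "?q \<in> cHom C ?D G" using tele_wt[OF c G] snoc.prems by auto
  have B: "B \<in> cTy C G" using snoc.prems by auto
  have Bq: "ctysub C B ?q \<in> cTy C ?D" using tysub_ty[OF c IH0(2) B] .
  let ?E = "cext C ?D (ctysub C B ?q)" and ?p = "cp C ?D (ctysub C B ?q)"
  have E: "?E \<in> cOb C" "?p \<in> cHom C ?E ?D" using ext_ob[OF c IH0(1) Bq] by auto
  have u: "u \<in> cHom C Del ?E" using snoc.prems by (simp add: tele_snoc)
  have pu: "ccomp C ?p u \<in> cHom C Del ?D" using comp_hom[OF c u E(2)] .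
  have eq: "ccomp C (ccomp C ?q ?p) u = ccomp C ?q (ccomp C ?p u)"
    using assoc[OF c u E(2) IH0(2)] by simp
  show ?case
  proof (intro allI impI)
    fix k assume k: "k < length (Bs @ [B])"
    show "cTm C Del (ctysub C ((Bs @ [B]) ! k) (ccomp C (snd (tele C G (Bs @ [B]))) u)) \<noteq> {}"
    proof (cases "k < length Bs")
      case True
      then show ?thesis using snoc.IH[OF _ pu] snoc.prems eq by (simp add: tele_snoc nth_append)
    next
      case False
      then have kk: "k = length Bs" using k by simp
      have "ctmsub C (cv C ?D (ctysub C B ?q)) u \<in> cTm C Del (ctysub C (ctysub C (ctysub C B ?q) ?p) u)"
        using tmsub_tm[OF c u _ v_tm[OF c IH0(1) Bq]] tysub_ty[OF c E(2) Bq] by blast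
      moreover have "ctysub C (ctysub C (ctysub C B ?q) ?p) u = ctysub C B (ccomp C (ccomp C ?q ?p) u)"
        using tysub_comp[OF c IH0(2) E(2) B] tysub_comp[OF c comp_hom[OF c E(2) IH0(2)] u B] by simp
      ultimately show ?thesis using kk by (auto simp: tele_snoc nth_append)
    qed
  qed
qed

lemma lemB:
  assumes c: "is_cwf C" and G: "G \<in> cOb C"
  shows "set Bs \<subseteq> cTy C G \<Longrightarrow> h \<in> cHom C Del G \<Longrightarrow>
     \<forall>k < length Bs. cTm C Del (ctysub C (Bs ! k) h) \<noteq> {} \<Longrightarrow>
     \<exists>u \<in> cHom C Del (fst (tele C G Bs)). ccomp C (snd (tele C G Bs)) u = h"
proof (induction Bs rule: rev_induct)
  case Nil then show ?case using id_left[OF c Nil(2)] hom_ob[OF c Nil(2)] id_hom[OF c, of Del]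
    by (auto simp: tele_nil intro!: bexI[of _ h])
next
  case (snoc B Bs)
  let ?D = "fst (tele C G Bs)" and ?q = "snd (tele C G Bs)"
  have IH0: "?D \<in> cOb C" "?q \<in> cHom C ?D G" using tele_wt[OF c G] snoc.prems by auto
  have B: "B \<in> cTy C G" using snoc.prems by auto
  have Bq: "ctysub C B ?q \<in> cTy C ?D" using tysub_ty[OF c IH0(2) B] .
  let ?E = "cext C ?D (ctysub C B ?q)" and ?p = "cp C ?D (ctysub C B ?q)"
  have E: "?E \<in> cOb C" "?p \<in> cHom C ?E ?D" using ext_ob[OF c IH0(1) Bq] by auto
  have "\<forall>k < length Bs. cTm C Del (ctysub C (Bs ! k) h) \<noteq> {}"
  proof (intro allI impI)
    fix k assume "k < length Bs"
    then show "cTm C Del (ctysub C (Bs ! k) h) \<noteq> {}"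
      using snoc.prems(3)[rule_format, of k] by (simp add: nth_append)
  qed
  then obtain u where u: "u \<in> cHom C Del ?D" "ccomp C ?q u = h" using snoc.IH snoc.prems by auto
  have "cTm C Del (ctysub C B h) \<noteq> {}" using snoc.prems(3)[rule_format, of "length Bs"] by simp
  then obtain b where b: "b \<in> cTm C Del (ctysub C B h)" by blast
  have b': "b \<in> cTm C Del (ctysub C (ctysub C B ?q) u)" using b tysub_comp[OF c IH0(2) u(1) B] u(2) by simp
  have P: "cpair C ?D (ctysub C B ?q) u b \<in> cHom C Del ?E"
      "ccomp C ?p (cpair C ?D (ctysub C B ?q) u b) = u" using pair_hom[OF c u(1) Bq b'] by auto
  show ?case
    apply (simp add: tele_snoc)
    apply (rule bexI[OF _ P(1)])
    using assoc[OF c P(1) E(2) IH0(2)] P(2) u(2) by simp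
qed

lemma refl_Fle:
  assumes c: "is_cwf C" and G: "G \<in> cOb C" and As: "set As \<subseteq> cTy C G"
  shows "Fle C G As As"
proof -
  have w: "fst (tele C G As) \<in> cOb C" "snd (tele C G As) \<in> cHom C (fst (tele C G As)) G"
    using tele_wt[OF c G As] by auto
  show ?thesis unfolding Fle_def
    using lemA[OF c G As id_hom[OF c w(1)]] id_right[OF c w(2)] by simp
qed

lemma trans_Fle:
  assumes c: "is_cwf C" and G: "G \<in> cOb C" and As: "set As \<subseteq> cTy C G"
    and Bs: "set Bs \<subseteq> cTy C G" and Cs: "set Cs \<subseteq> cTy C G"
    and ab: "Fle C G As Bs" and bc: "Fle C G Bs Cs"
  shows "Fle C G As Cs"
proof -
  have wa: "snd (tele C G As) \<in> cHom C (fst (tele C G As)) G" using tele_wt[OF c G As] by auto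
  have wb: "snd (tele C G Bs) \<in> cHom C (fst (tele C G Bs)) G" using tele_wt[OF c G Bs] by auto
  obtain u where u: "u \<in> cHom C (fst (tele C G As)) (fst (tele C G Bs))"
     "ccomp C (snd (tele C G Bs)) u = snd (tele C G As)"
    using lemB[OF c G Bs wa] ab unfolding Fle_def by blast
  show ?thesis unfolding Fle_def
  proof (intro allI impI)
    fix k assume k: "k < length Cs"
    then obtain t where t: "t \<in> cTm C (fst (tele C G Bs)) (ctysub C (Cs ! k) (snd (tele C G Bs)))"
      using bc unfolding Fle_def by blast
    have Ck: "Cs ! k \<in> cTy C G" using k Cs by auto
    have "ctmsub C t u \<in> cTm C (fst (tele C G As)) (ctysub C (ctysub C (Cs ! k) (snd (tele C G Bs))) u)"
      using tmsub_tm[OF c u(1) tysub_ty[OF c wb Ck] t] .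
    then show "cTm C (fst (tele C G As)) (ctysub C (Cs ! k) (snd (tele C G As))) \<noteq> {}"
      using tysub_comp[OF c wb u(1) Ck] u(2) by auto
  qed
qed

lemma Fle_append:
  "Fle C G Z (As @ Bs) \<longleftrightarrow> Fle C G Z As \<and> Fle C G Z Bs"
proof -
  define P where "P = (\<lambda>X. cTm C (fst (tele C G Z)) (ctysub C X (snd (tele C G Z))) \<noteq> {})"
  have F: "Fle C G Z Xs \<longleftrightarrow> (\<forall>k < length Xs. P (Xs ! k))" for Xs
    unfolding Fle_def P_def by simp
  have 1: "(\<forall>k < length (As @ Bs). P ((As @ Bs) ! k)) \<Longrightarrow> (\<forall>k < length As. P (As ! k))"
    by (metis length_append nth_append_left trans_less_add1)
  have 2: "(\<forall>k < length (As @ Bs). P ((As @ Bs) ! k)) \<Longrightarrow> (\<forall>k < length Bs. P (Bs ! k))"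
    by (metis add_less_cancel_left length_append nth_append_length_plus)
  have 3: "(\<forall>k < length As. P (As ! k)) \<Longrightarrow> (\<forall>k < length Bs. P (Bs ! k)) \<Longrightarrow>
       (\<forall>k < length (As @ Bs). P ((As @ Bs) ! k))"
  proof (intro allI impI)
    fix k assume a: "\<forall>k < length As. P (As ! k)" "\<forall>k < length Bs. P (Bs ! k)"
      "k < length (As @ Bs)"
    show "P ((As @ Bs) ! k)"
    proof (cases "k < length As")
      case True then show ?thesis using a by (simp add: nth_append)
    next
      case False then show ?thesis using a by (simp add: nth_append)
    qed
  qed
  show ?thesis unfolding F using 1 2 3 by blast
qed

lemma mono_Fle:
  assumes c: "is_cwf C" and f: "f \<in> cHom C D G" and As: "set As \<subseteq> cTy C G"
    and Bs: "set Bs \<subseteq> cTy C G" and ab: "Fle C G As Bs"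
  shows "Fle C D (Fsub C f As) (Fsub C f Bs)"
proof -
  have G: "G \<in> cOb C" and D: "D \<in> cOb C" using hom_ob[OF c f] by auto
  have Af: "set (Fsub C f As) \<subseteq> cTy C D" using As tysub_ty[OF c f] by (auto simp: Fsub_def)
  have wa: "snd (tele C G As) \<in> cHom C (fst (tele C G As)) G" using tele_wt[OF c G As] by auto
  have wd: "snd (tele C D (Fsub C f As)) \<in> cHom C (fst (tele C D (Fsub C f As))) D"
    using tele_wt[OF c D Af] by auto
  let ?h = "ccomp C f (snd (tele C D (Fsub C f As)))"
  have h: "?h \<in> cHom C (fst (tele C D (Fsub C f As))) G" using comp_hom[OF c wd f] .
  have "\<forall>k < length As. cTm C (fst (tele C D (Fsub C f As))) (ctysub C (As ! k) ?h) \<noteq> {}"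
  proof (intro allI impI)
    fix k assume k: "k < length As"
    have "Fle C D (Fsub C f As) (Fsub C f As)" using refl_Fle[OF c D Af] .
    then have "cTm C (fst (tele C D (Fsub C f As))) (ctysub C (ctysub C (As ! k) f) (snd (tele C D (Fsub C f As)))) \<noteq> {}"
      using k unfolding Fle_def Fsub_def by auto
    moreover have "As ! k \<in> cTy C G" using k As by auto
    ultimately show "cTm C (fst (tele C D (Fsub C f As))) (ctysub C (As ! k) ?h) \<noteq> {}"
      using tysub_comp[OF c f wd, of "As ! k"] by simp
  qed
  then obtain w where w: "w \<in> cHom C (fst (tele C D (Fsub C f As))) (fst (tele C G As))"
     "ccomp C (snd (tele C G As)) w = ?h"
    using lemB[OF c G As h] by blast
  show ?thesis unfolding Fle_def
  proof (intro allI impI)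
    fix k assume k: "k < length (Fsub C f Bs)"
    then have k': "k < length Bs" by (simp add: Fsub_def)
    then obtain t where t: "t \<in> cTm C (fst (tele C G As)) (ctysub C (Bs ! k) (snd (tele C G As)))"
      using ab unfolding Fle_def by blast
    have Bk: "Bs ! k \<in> cTy C G" using k' Bs by auto
    have "ctmsub C t w \<in> cTm C (fst (tele C D (Fsub C f As))) (ctysub C (ctysub C (Bs ! k) (snd (tele C G As))) w)"
      using tmsub_tm[OF c w(1) tysub_ty[OF c wa Bk] t] .
    moreover have "ctysub C (ctysub C (Bs ! k) (snd (tele C G As))) w
        = ctysub C (ctysub C (Bs ! k) f) (snd (tele C D (Fsub C f As)))"
      using tysub_comp[OF c wa w(1) Bk] w(2) tysub_comp[OF c f wd Bk] by simp
    ultimately show "cTm C (fst (tele C D (Fsub C f As))) (ctysub C (Fsub C f Bs ! k) (snd (tele C D (Fsub C f As)))) \<noteq> {}"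
      using k' by (auto simp: Fsub_def)
  qed
qed

theorem mainTheorem16:
  fixes C :: "('o, 'm, 'ty, 'tm, 'z) cwf_data_scheme"
  assumes "is_cwf C"
  shows "(\<forall>G \<in> cOb C. lower_semilattice (FF C G) (Fle C G) [] (@))
       \<and> (\<forall>G D f. f \<in> cHom C D G \<longrightarrow>
            lsl_hom (FF C G) (Fle C G) [] (@) (FF C D) (Fle C D) [] (@) (Fsub C f))
       \<and> (\<forall>G \<in> cOb C. \<forall>As \<in> FF C G. Fsub C (cid C G) As = As)
       \<and> (\<forall>G D E f g. f \<in> cHom C D G \<longrightarrow> g \<in> cHom C E D \<longrightarrow>
            (\<forall>As \<in> FF C G. Fsub C (ccomp C f g) As = Fsub C g (Fsub C f As)))"
proof (intro conjI ballI allI impI)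
  fix G assume G: "G \<in> cOb C"
  have R: "\<forall>x \<in> FF C G. Fle C G x x"
  proof
    fix x assume "x \<in> FF C G"
    then have "set x \<subseteq> cTy C G" by (simp add: FF_def)
    then show "Fle C G x x" by (rule refl_Fle[OF assms G])
  qed
  have T: "\<forall>x \<in> FF C G. \<forall>y \<in> FF C G. \<forall>z \<in> FF C G. Fle C G x y \<longrightarrow> Fle C G y z \<longrightarrow> Fle C G x z"
  proof (intro ballI impI)
    fix x y z assume "x \<in> FF C G" "y \<in> FF C G" "z \<in> FF C G" "Fle C G x y" "Fle C G y z"
    then show "Fle C G x z" using trans_Fle[OF assms G, of x y z] by (simp add: FF_def)
  qed
  have T1: "[] \<in> FF C G" by (simp add: FF_def)
  have T2: "\<forall>x \<in> FF C G. Fle C G x []" unfolding Fle_def by simp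
  have M: "\<forall>x \<in> FF C G. \<forall>y \<in> FF C G. x @ y \<in> FF C G \<and> Fle C G (x @ y) x \<and> Fle C G (x @ y) y
        \<and> (\<forall>z \<in> FF C G. Fle C G z x \<longrightarrow> Fle C G z y \<longrightarrow> Fle C G z (x @ y))"
  proof (intro ballI conjI impI)
    fix x y assume x: "x \<in> FF C G" and y: "y \<in> FF C G"
    have xy: "x @ y \<in> FF C G" using x y by (simp add: FF_def)
    then have rxy: "Fle C G (x @ y) (x @ y)" using R by blast
    show "x @ y \<in> FF C G" by (rule xy)
    show "Fle C G (x @ y) x" "Fle C G (x @ y) y" using rxy by (simp_all only: Fle_append)
    fix z assume "Fle C G z x" "Fle C G z y"
    then show "Fle C G z (x @ y)" by (simp only: Fle_append)
  qed
  show "lower_semilattice (FF C G) (Fle C G) [] (@)"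
    unfolding lower_semilattice_def using R T T1 T2 M by (intro conjI)
next
  fix G D f assume f: "f \<in> cHom C D G"
  have 1: "\<forall>x \<in> FF C G. Fsub C f x \<in> FF C D"
    using tysub_ty[OF assms f] by (auto simp: FF_def Fsub_def)
  have 2: "\<forall>x \<in> FF C G. \<forall>y \<in> FF C G. Fle C G x y \<longrightarrow> Fle C D (Fsub C f x) (Fsub C f y)"
    using mono_Fle[OF assms f] by (simp add: FF_def)
  show "lsl_hom (FF C G) (Fle C G) [] (@) (FF C D) (Fle C D) [] (@) (Fsub C f)"
    unfolding lsl_hom_def using 1 2 by (simp add: Fsub_def)
next
  fix G As assume G: "G \<in> cOb C" and "As \<in> FF C G"
  then have "\<forall>A \<in> set As. ctysub C A (cid C G) = A" using tysub_id[OF assms G] by (auto simp: FF_def)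
  then show "Fsub C (cid C G) As = As"
    by (simp add: Fsub_def map_idI)
next
  fix G D E f g As assume f: "f \<in> cHom C D G" and g: "g \<in> cHom C E D" and "As \<in> FF C G"
  then have "\<forall>A \<in> set As. ctysub C A (ccomp C f g) = ctysub C (ctysub C A f) g"
    using tysub_comp[OF assms f g] by (auto simp: FF_def)
  then show "Fsub C (ccomp C f g) As = Fsub C g (Fsub C f As)"
    by (simp add: Fsub_def)
qed

end
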